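(* Let $G=(V,E,I,\{s,t\})$ be an inner Eulerian grapht with $|E|\le\omega$ in which $s$ is linked. Then there is a linkage $\mathcal{P}$ of $s$ such that there is a family of pairwise edge-disjoint cycles in $G-E(\mathcal{P})$ covering $\delta_{G-E(\mathcal{P})}(t)$.
   Context: Graphs may have parallel edges but no loops; all paths finite. With terminal set $\{s,t\}$, the grapht is inner Eulerian if no $X\subseteq V\setminus\{s,t\}$ has the number of edges with exactly one end in $X$ equal to an odd natural number. $\delta(x)$ is the set of edges at $x$. A system of edge-disjoint $st$-paths links $s$ if it covers $\delta(s)$; $s$ is linked if such a system exists; a linkage of $s$ is a system linking $s$ in which each path contains an edge of $\delta(s)$. $E(\mathcal{P})$ is the union of edge sets of paths in $\mathcal{P}$. *)

theory Defs
  imports Main "HOL-Library.Countable_Set"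
begin

text \<open>Parallel edges are allowed since distinct edges may have the same ends.\<close>

definition multigraph :: "'v set \<Rightarrow> 'e set \<Rightarrow> ('e \<Rightarrow> 'v set) \<Rightarrow> bool" where
  "multigraph V E I \<longleftrightarrow> (\<forall>e\<in>E. I e \<subseteq> V \<and> card (I e) = 2)"

definition cut_edges :: "'e set \<Rightarrow> ('e \<Rightarrow> 'v set) \<Rightarrow> 'v set \<Rightarrow> 'e set" where
  "cut_edges E I X = {e \<in> E. card (I e \<inter> X) = 1}"

definition delta :: "'e set \<Rightarrow> ('e \<Rightarrow> 'v set) \<Rightarrow> 'v \<Rightarrow> 'e set" where
  "delta E I x = {e \<in> E. x \<in> I e}"

definition inner_eulerian :: "'v set \<Rightarrow> 'e set \<Rightarrow> ('e \<Rightarrow> 'v set) \<Rightarrow> 'v \<Rightarrow> 'v \<Rightarrow> bool" where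
  "inner_eulerian V E I s t \<longleftrightarrow>
     (\<forall>X. X \<subseteq> V - {s, t} \<longrightarrow> \<not> (finite (cut_edges E I X) \<and> odd (card (cut_edges E I X))))"

definition is_path :: "'e set \<Rightarrow> ('e \<Rightarrow> 'v set) \<Rightarrow> 'v list \<times> 'e list \<Rightarrow> bool" where
  "is_path E I P \<longleftrightarrow> (case P of (vs, es) \<Rightarrow>
      length vs = Suc (length es) \<and> distinct vs \<and>
      (\<forall>i < length es. es ! i \<in> E \<and> I (es ! i) = {vs ! i, vs ! Suc i}))"

definition st_path :: "'e set \<Rightarrow> ('e \<Rightarrow> 'v set) \<Rightarrow> 'v \<Rightarrow> 'v \<Rightarrow> 'v list \<times> 'e list \<Rightarrow> bool" where
  "st_path E I s t P \<longleftrightarrow> is_path E I P \<and> hd (fst P) = s \<and> last (fst P) = t"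

definition path_edges :: "'v list \<times> 'e list \<Rightarrow> 'e set" where
  "path_edges P = set (snd P)"

definition system_edges :: "('v list \<times> 'e list) set \<Rightarrow> 'e set" where
  "system_edges \<P> = (\<Union>P\<in>\<P>. path_edges P)"

definition edge_disjoint_st_system ::
  "'e set \<Rightarrow> ('e \<Rightarrow> 'v set) \<Rightarrow> 'v \<Rightarrow> 'v \<Rightarrow> ('v list \<times> 'e list) set \<Rightarrow> bool" where
  "edge_disjoint_st_system E I s t \<P> \<longleftrightarrow>
     (\<forall>P\<in>\<P>. st_path E I s t P) \<and>
     (\<forall>P\<in>\<P>. \<forall>Q\<in>\<P>. P \<noteq> Q \<longrightarrow> path_edges P \<inter> path_edges Q = {})"

definition system_links ::
  "'e set \<Rightarrow> ('e \<Rightarrow> 'v set) \<Rightarrow> 'v \<Rightarrow> 'v \<Rightarrow> ('v list \<times> 'e list) set \<Rightarrow> bool" where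
  "system_links E I s t \<P> \<longleftrightarrow>
     edge_disjoint_st_system E I s t \<P> \<and> delta E I s \<subseteq> system_edges \<P>"

definition is_linked :: "'e set \<Rightarrow> ('e \<Rightarrow> 'v set) \<Rightarrow> 'v \<Rightarrow> 'v \<Rightarrow> bool" where
  "is_linked E I s t \<longleftrightarrow> (\<exists>\<P>. system_links E I s t \<P>)"

definition linkage ::
  "'e set \<Rightarrow> ('e \<Rightarrow> 'v set) \<Rightarrow> 'v \<Rightarrow> 'v \<Rightarrow> ('v list \<times> 'e list) set \<Rightarrow> bool" where
  "linkage E I s t \<P> \<longleftrightarrow>
     system_links E I s t \<P> \<and> (\<forall>P\<in>\<P>. path_edges P \<inter> delta E I s \<noteq> {})"

text \<open>C is (the edge set of) a cycle in the graph with edge set E: a closed walk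
  v_0 e_0 v_1 ... v_{n-1} e_{n-1} v_0 with n \<ge> 2, distinct vertices and distinct edges
  (n = 2 gives a cycle formed by two parallel edges).\<close>
definition is_cycle :: "'e set \<Rightarrow> ('e \<Rightarrow> 'v set) \<Rightarrow> 'e set \<Rightarrow> bool" where
  "is_cycle E I C \<longleftrightarrow> (\<exists>vs es.
      length vs = length es \<and> 2 \<le> length es \<and> distinct vs \<and> distinct es \<and>
      (\<forall>i < length es. es ! i \<in> E \<and>
         I (es ! i) = {vs ! i, vs ! ((Suc i) mod (length vs))}) \<and>
      set es = C)"

end

theory Submission imports Defs begin

lemma is_path_mono: "is_path A I P \<Longrightarrow> A \<subseteq> B \<Longrightarrow> is_path B I P"
  unfolding is_path_def by (auto split: prod.splits)

lemma is_path_edges: "is_path A I P \<Longrightarrow> path_edges P \<subseteq> A"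
  unfolding is_path_def path_edges_def by (auto split: prod.splits simp: in_set_conv_nth)

lemma is_path_restrict: "is_path A I P \<Longrightarrow> path_edges P \<subseteq> B \<Longrightarrow> is_path B I P"
  unfolding is_path_def path_edges_def by (auto split: prod.splits)

lemma st_path_restrict: "st_path A I s t P \<Longrightarrow> path_edges P \<subseteq> B \<Longrightarrow> st_path B I s t P"
  unfolding st_path_def using is_path_restrict by blast

lemma is_cycle_restrict: "is_cycle A I c \<Longrightarrow> c \<subseteq> B \<Longrightarrow> is_cycle B I c"
  unfolding is_cycle_def by (metis nth_mem subsetD)

lemma is_cycle_sub: "is_cycle A I c \<Longrightarrow> c \<subseteq> A"
  unfolding is_cycle_def by (auto simp: in_set_conv_nth)

lemma is_cycle_finite: "is_cycle A I c \<Longrightarrow> finite c"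
  unfolding is_cycle_def by auto

lemma path_distinct_edges:
  assumes "is_path A I (vs, es)" shows "distinct es"
proof -
  have L: "length vs = Suc (length es)" "distinct vs"
    and E: "\<And>i. i < length es \<Longrightarrow> I (es ! i) = {vs ! i, vs ! Suc i}"
    using assms unfolding is_path_def by auto
  show ?thesis unfolding distinct_conv_nth
  proof (intro allI impI)
    fix i j assume ij: "i < length es" "j < length es" "i \<noteq> j"
    show "es ! i \<noteq> es ! j"
    proof
      assume "es ! i = es ! j"
      then have "{vs ! i, vs ! Suc i} = {vs ! j, vs ! Suc j}" using E ij by metis
      then have "(vs ! i = vs ! j \<and> vs ! Suc i = vs ! Suc j) \<or> (vs ! i = vs ! Suc j \<and> vs ! Suc i = vs ! j)"
        by (simp add: doubleton_eq_iff)
      then show False using ij L by (auto simp: nth_eq_iff_index_eq)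
    qed
  qed
qed

lemma path_s_edge:
  assumes "is_path A I (vs, es)" "hd vs = s" "e \<in> set es" "s \<in> I e"
  shows "e = es ! 0"
proof -
  have L: "length vs = Suc (length es)" "distinct vs"
    and E: "\<And>i. i < length es \<Longrightarrow> I (es ! i) = {vs ! i, vs ! Suc i}"
    using assms unfolding is_path_def by auto
  obtain i where i: "i < length es" "e = es ! i" using assms(3) by (auto simp: in_set_conv_nth)
  have s0: "s = vs ! 0" using assms(2) L by (cases vs) auto
  have "s = vs ! i \<or> s = vs ! Suc i" using E[OF i(1)] assms(4) i(2) by auto
  then have "i = 0" using s0 L i by (auto simp: nth_eq_iff_index_eq)
  then show ?thesis using i by simp
qed

lemma st_path_first_edge:
  assumes "st_path A I s t (vs, es)" "s \<noteq> t"
  shows "es \<noteq> [] \<and> es ! 0 \<in> A \<and> s \<in> I (es ! 0)"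
proof -
  have L: "length vs = Suc (length es)" "hd vs = s" "last vs = t"
    and E: "\<And>i. i < length es \<Longrightarrow> es ! i \<in> A \<and> I (es ! i) = {vs ! i, vs ! Suc i}"
    using assms unfolding is_path_def st_path_def by auto
  have ne: "es \<noteq> []" using L assms(2) by (cases vs) auto
  then have "vs ! 0 = s" using L by (cases vs) auto
  then show ?thesis using E[of 0] ne by auto
qed

lemma walk_parity:
  "even (card {i. i < n \<and> ((w i \<in> X) \<noteq> (w (Suc i) \<in> X))}) \<longleftrightarrow> ((w 0 \<in> X) = (w n \<in> X))"
proof (induction n)
  case 0 then show ?case by simp
next
  case (Suc n)
  let ?P = "\<lambda>i. (w i \<in> X) \<noteq> (w (Suc i) \<in> X)"
  have eq: "{i. i < Suc n \<and> ?P i} = (if ?P n then insert n {i. i < n \<and> ?P i} else {i. i < n \<and> ?P i})"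
    by (auto simp: less_Suc_eq)
  have fin: "finite {i. i < n \<and> ?P i}" by simp
  show ?case using Suc eq fin by (cases "?P n") auto
qed

lemma card_cut_two: "a \<noteq> b \<Longrightarrow> (card ({a, b} \<inter> X) = 1) \<longleftrightarrow> ((a \<in> X) \<noteq> (b \<in> X))"
  by (cases "a \<in> X"; cases "b \<in> X") auto

lemma cut_list_parity:
  assumes "distinct es" and "\<And>i. i < length es \<Longrightarrow> I (es ! i) = {w i, w (Suc i)} \<and> w i \<noteq> w (Suc i)"
  shows "finite (cut_edges (set es) I X) \<and>
    (even (card (cut_edges (set es) I X)) \<longleftrightarrow> ((w 0 \<in> X) = (w (length es) \<in> X)))"
proof -
  let ?S = "{i. i < length es \<and> ((w i \<in> X) \<noteq> (w (Suc i) \<in> X))}"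
  have key: "\<And>i. i < length es \<Longrightarrow> card (I (es ! i) \<inter> X) = 1 \<longleftrightarrow> ((w i \<in> X) \<noteq> (w (Suc i) \<in> X))"
  proof -
    fix i assume i: "i < length es"
    have "I (es ! i) = {w i, w (Suc i)}" "w i \<noteq> w (Suc i)" using assms(2)[OF i] by auto
    then show "card (I (es ! i) \<inter> X) = 1 \<longleftrightarrow> ((w i \<in> X) \<noteq> (w (Suc i) \<in> X))"
      using card_cut_two by simp
  qed
  have "cut_edges (set es) I X = (\<lambda>i. es ! i) ` ?S"
  proof
    show "cut_edges (set es) I X \<subseteq> (\<lambda>i. es ! i) ` ?S"
    proof
      fix e assume "e \<in> cut_edges (set es) I X"
      then have e: "e \<in> set es" "card (I e \<inter> X) = 1" unfolding cut_edges_def by auto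
      then obtain i where i: "i < length es" "e = es ! i" by (auto simp: in_set_conv_nth)
      then have "i \<in> ?S" using key[OF i(1)] e(2) by simp
      then show "e \<in> (\<lambda>i. es ! i) ` ?S" using i(2) by (rule rev_image_eqI)
    qed
    show "(\<lambda>i. es ! i) ` ?S \<subseteq> cut_edges (set es) I X"
    proof
      fix e assume "e \<in> (\<lambda>i. es ! i) ` ?S"
      then obtain i where i: "i \<in> ?S" "e = es ! i" by blast
      then have "card (I e \<inter> X) = 1" using key[of i] by simp
      moreover have "e \<in> set es" using i by simp
      ultimately show "e \<in> cut_edges (set es) I X" unfolding cut_edges_def by simp
    qed
  qed
  moreover have "inj_on (\<lambda>i. es ! i) ?S" using inj_on_nth[OF assms(1), of ?S] by simp
  ultimately have "card (cut_edges (set es) I X) = card ?S" by (simp add: card_image)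
  moreover have "finite (cut_edges (set es) I X)" unfolding cut_edges_def by simp
  ultimately show ?thesis using walk_parity[of "length es" w X] by simp
qed

lemma st_path_parity:
  assumes "st_path A I s t P" "s \<notin> X" "t \<notin> X"
  shows "finite (cut_edges (path_edges P) I X) \<and> even (card (cut_edges (path_edges P) I X))"
proof -
  obtain vs es where P: "P = (vs, es)" by (cases P)
  have L: "length vs = Suc (length es)" "distinct vs" "hd vs = s" "last vs = t"
    and E: "\<And>i. i < length es \<Longrightarrow> I (es ! i) = {vs ! i, vs ! Suc i}"
    using assms unfolding is_path_def st_path_def P by auto
  have d: "distinct es" using assms path_distinct_edges unfolding st_path_def P by blast
  have "\<And>i. i < length es \<Longrightarrow> I (es ! i) = {vs ! i, vs ! Suc i} \<and> vs ! i \<noteq> vs ! Suc i"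
    using E L by (simp add: nth_eq_iff_index_eq)
  from cut_list_parity[OF d, of I "\<lambda>i. vs ! i", OF this]
  have "finite (cut_edges (set es) I X) \<and> even (card (cut_edges (set es) I X)) = ((vs ! 0 \<in> X) = (vs ! length es \<in> X))" .
  moreover have "vs ! 0 = s" using L by (cases vs) auto
  moreover have "vs ! length es = t" using L last_conv_nth[of vs] by fastforce
  ultimately show ?thesis using assms P by (simp add: path_edges_def)
qed

lemma cycle_parity:
  assumes "is_cycle A I c"
  shows "finite (cut_edges c I X) \<and> even (card (cut_edges c I X))"
proof -
  obtain vs es where L: "length vs = length es" "2 \<le> length es" "distinct vs" "distinct es"
    and E: "\<And>i. i < length es \<Longrightarrow> I (es ! i) = {vs ! i, vs ! ((Suc i) mod (length vs))}"
    and c: "set es = c"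
    using assms unfolding is_cycle_def by blast
  let ?w = "\<lambda>i. vs ! (i mod length vs)"
  have "\<And>i. i < length es \<Longrightarrow> I (es ! i) = {?w i, ?w (Suc i)} \<and> ?w i \<noteq> ?w (Suc i)"
  proof -
    fix i assume i: "i < length es"
    have "i mod length vs = i" using i L by simp
    moreover have "i \<noteq> Suc i mod length vs"
    proof (cases "Suc i < length vs")
      case True then show ?thesis by simp
    next
      case False then have "Suc i = length vs" using i L by simp
      then show ?thesis using L by simp
    qed
    moreover have "Suc i mod length vs < length vs" using L by (intro mod_less_divisor) linarith
    ultimately show "I (es ! i) = {?w i, ?w (Suc i)} \<and> ?w i \<noteq> ?w (Suc i)"
      using E[OF i] L i by (simp add: nth_eq_iff_index_eq)
  qed
  from cut_list_parity[OF L(4), of I ?w, OF this]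
  show ?thesis using L c by simp
qed

lemma path_suffix:
  assumes "is_path A I (vs, es)" "k < length vs"
  shows "is_path A I (drop k vs, drop k es)"
  using assms unfolding is_path_def by auto

lemma path_prepend:
  assumes "is_path A I (vs, es)" "w \<notin> set vs" "e \<in> A" "I e = {w, hd vs}"
  shows "is_path A I (w # vs, e # es)"
proof -
  have L: "length vs = Suc (length es)" using assms unfolding is_path_def by auto
  then have "hd vs = vs ! 0" by (cases vs) auto
  then show ?thesis using assms unfolding is_path_def by (auto simp: nth_Cons split: nat.splits)
qed

lemma path_join:
  assumes "is_path A I (vs1, es1)" "is_path B I (vs2, es2)" "last vs1 = hd vs2"
    "distinct (butlast vs1 @ vs2)"
  shows "is_path (A \<union> B) I (butlast vs1 @ vs2, es1 @ es2)"
proof -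
  have L1: "length vs1 = Suc (length es1)"
    and E1: "\<And>i. i < length es1 \<Longrightarrow> es1 ! i \<in> A \<and> I (es1 ! i) = {vs1 ! i, vs1 ! Suc i}"
    using assms(1) unfolding is_path_def by auto
  have L2: "length vs2 = Suc (length es2)"
    and E2: "\<And>i. i < length es2 \<Longrightarrow> es2 ! i \<in> B \<and> I (es2 ! i) = {vs2 ! i, vs2 ! Suc i}"
    using assms(2) unfolding is_path_def by auto
  have lb: "length (butlast vs1) = length es1" using L1 by simp
  have bn: "\<And>i. i < length es1 \<Longrightarrow> butlast vs1 ! i = vs1 ! i" using L1 by (simp add: nth_butlast)
  have lastn: "vs1 ! length es1 = vs2 ! 0"
    using assms(3) L1 L2 last_conv_nth[of vs1] by (cases vs2) fastforce+
  have "\<forall>i < length (es1 @ es2). (es1 @ es2) ! i \<in> A \<union> B \<and>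
      I ((es1 @ es2) ! i) = {(butlast vs1 @ vs2) ! i, (butlast vs1 @ vs2) ! Suc i}"
  proof (intro allI impI)
    fix i assume i: "i < length (es1 @ es2)"
    show "(es1 @ es2) ! i \<in> A \<union> B \<and>
      I ((es1 @ es2) ! i) = {(butlast vs1 @ vs2) ! i, (butlast vs1 @ vs2) ! Suc i}"
    proof (cases "i < length es1")
      case True
      have a: "(butlast vs1 @ vs2) ! i = vs1 ! i" using True lb bn by (simp add: nth_append)
      have b: "(butlast vs1 @ vs2) ! Suc i = vs1 ! Suc i"
      proof (cases "Suc i < length es1")
        case True then show ?thesis using lb bn by (simp add: nth_append)
      next
        case False then have "Suc i = length es1" using \<open>i < length es1\<close> by simp
        then show ?thesis using lb lastn by (simp add: nth_append)
      qed
      show ?thesis using E1[OF True] True a b by (simp add: nth_append)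
    next
      case False
      then obtain k where k: "i = length es1 + k" "k < length es2" using i
        by (metis add_diff_inverse_nat length_append nat_add_left_cancel_less)
      show ?thesis using E2[OF k(2)] k lb by (simp add: nth_append)
    qed
  qed
  moreover have "length (butlast vs1 @ vs2) = Suc (length (es1 @ es2))" using L1 L2 by simp
  ultimately show ?thesis using assms(4) unfolding is_path_def prod.case by (intro conjI)
qed


lemma delta_diff: "delta (H - A) I s = delta H I s - A"
  unfolding delta_def by auto

lemma links_remove:
  assumes "system_links H I s t R" "R' \<subseteq> R" "A \<inter> system_edges R' = {}"
    "delta H I s - A \<subseteq> system_edges R'"
  shows "system_links (H - A) I s t R'"
proof -
  have sp: "\<forall>P\<in>R. st_path H I s t P"
    using assms(1) unfolding system_links_def edge_disjoint_st_system_def by (elim conjE)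
  have dj: "\<forall>P\<in>R. \<forall>Q\<in>R. P \<noteq> Q \<longrightarrow> path_edges P \<inter> path_edges Q = {}"
    using assms(1) unfolding system_links_def edge_disjoint_st_system_def by (elim conjE)
  have "\<forall>P\<in>R'. st_path (H - A) I s t P"
  proof
    fix P assume P: "P \<in> R'"
    then have sP: "st_path H I s t P" using sp assms(2) by blast
    have "path_edges P \<subseteq> system_edges R'" using P unfolding system_edges_def by (rule UN_upper)
    moreover have "path_edges P \<subseteq> H" using sP is_path_edges unfolding st_path_def by blast
    ultimately have "path_edges P \<subseteq> H - A" using assms(3) by blast
    then show "st_path (H - A) I s t P" by (rule st_path_restrict[OF sP])
  qed
  moreover have "\<forall>P\<in>R'. \<forall>Q\<in>R'. P \<noteq> Q \<longrightarrow> path_edges P \<inter> path_edges Q = {}"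
    using dj assms(2) by (meson subsetD)
  moreover have "delta (H - A) I s \<subseteq> system_edges R'" using assms(4) by (simp add: delta_diff)
  ultimately show ?thesis unfolding system_links_def edge_disjoint_st_system_def by (intro conjI)
qed

definition invar where
  "invar V E I s t F C \<longleftrightarrow>
     (\<forall>P\<in>F. st_path E I s t P) \<and>
     (\<forall>P\<in>F. \<forall>Q\<in>F. P \<noteq> Q \<longrightarrow> path_edges P \<inter> path_edges Q = {}) \<and>
     (\<forall>c\<in>C. is_cycle E I c) \<and>
     (\<forall>c\<in>C. \<forall>d\<in>C. c \<noteq> d \<longrightarrow> c \<inter> d = {}) \<and>
     system_edges F \<inter> \<Union>C = {} \<and>
     delta E I s \<inter> \<Union>C = {} \<and>
     system_edges F \<union> \<Union>C \<subseteq> E \<and>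
     (\<forall>X. X \<subseteq> V - {s, t} \<longrightarrow> finite (cut_edges (system_edges F \<union> \<Union>C) I X) \<and>
          even (card (cut_edges (system_edges F \<union> \<Union>C) I X))) \<and>
     is_linked (E - (system_edges F \<union> \<Union>C)) I s t"

lemma cut_union: "A \<inter> B = {} \<Longrightarrow> cut_edges (A \<union> B) I X = cut_edges A I X \<union> cut_edges B I X
   \<and> cut_edges A I X \<inter> cut_edges B I X = {}"
  unfolding cut_edges_def by auto

lemma even_union:
  assumes "A \<inter> B = {}" "finite (cut_edges A I X) \<and> even (card (cut_edges A I X))"
    "finite (cut_edges B I X) \<and> even (card (cut_edges B I X))"
  shows "finite (cut_edges (A \<union> B) I X) \<and> even (card (cut_edges (A \<union> B) I X))"
  using cut_union[OF assms(1), of I X] assms(2,3) by (simp add: card_Un_disjoint)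

lemma invar_init: "is_linked E I s t \<Longrightarrow> invar V E I s t {} {}"
  unfolding invar_def system_edges_def cut_edges_def by simp

lemma invarD:
  assumes "invar V E I s t F C"
  shows invar_paths: "\<forall>P\<in>F. st_path E I s t P"
    and invar_pdisj: "\<forall>P\<in>F. \<forall>Q\<in>F. P \<noteq> Q \<longrightarrow> path_edges P \<inter> path_edges Q = {}"
    and invar_cycles: "\<forall>c\<in>C. is_cycle E I c"
    and invar_cdisj: "\<forall>c\<in>C. \<forall>d\<in>C. c \<noteq> d \<longrightarrow> c \<inter> d = {}"
    and invar_pc: "system_edges F \<inter> \<Union>C = {}"
    and invar_sc: "delta E I s \<inter> \<Union>C = {}"
    and invar_sub: "system_edges F \<union> \<Union>C \<subseteq> E"
    and invar_par: "\<forall>X. X \<subseteq> V - {s, t} \<longrightarrow> finite (cut_edges (system_edges F \<union> \<Union>C) I X) \<and>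
          even (card (cut_edges (system_edges F \<union> \<Union>C) I X))"
    and invar_lk: "is_linked (E - (system_edges F \<union> \<Union>C)) I s t"
  using assms unfolding invar_def by simp_all

lemma invarI:
  assumes "\<forall>P\<in>F. st_path E I s t P"
    "\<forall>P\<in>F. \<forall>Q\<in>F. P \<noteq> Q \<longrightarrow> path_edges P \<inter> path_edges Q = {}"
    "\<forall>c\<in>C. is_cycle E I c"
    "\<forall>c\<in>C. \<forall>d\<in>C. c \<noteq> d \<longrightarrow> c \<inter> d = {}"
    "system_edges F \<inter> \<Union>C = {}"
    "delta E I s \<inter> \<Union>C = {}"
    "system_edges F \<union> \<Union>C \<subseteq> E"
    "\<forall>X. X \<subseteq> V - {s, t} \<longrightarrow> finite (cut_edges (system_edges F \<union> \<Union>C) I X) \<and>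
          even (card (cut_edges (system_edges F \<union> \<Union>C) I X))"
    "is_linked (E - (system_edges F \<union> \<Union>C)) I s t"
  shows "invar V E I s t F C"
  unfolding invar_def using assms by (intro conjI)

lemma invar_add_path:
  assumes "invar V E I s t F C"
    "st_path (E - (system_edges F \<union> \<Union>C)) I s t Q"
    "is_linked ((E - (system_edges F \<union> \<Union>C)) - path_edges Q) I s t"
  shows "invar V E I s t (insert Q F) C"
proof -
  let ?D = "system_edges F \<union> \<Union>C"
  have QE: "path_edges Q \<subseteq> E - ?D" using assms(2) unfolding st_path_def by (intro is_path_edges[of _ I]) simp
  have se: "system_edges (insert Q F) = path_edges Q \<union> system_edges F"
    unfolding system_edges_def by auto
  have D': "system_edges (insert Q F) \<union> \<Union>C = path_edges Q \<union> ?D" using se by auto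
  have PD: "\<And>P. P \<in> F \<Longrightarrow> path_edges P \<subseteq> ?D" unfolding system_edges_def by auto
  have c1: "\<forall>P\<in>insert Q F. st_path E I s t P"
  proof -
    have "st_path E I s t Q" using QE by (intro st_path_restrict[OF assms(2)]) blast
    then show ?thesis using invar_paths[OF assms(1)] by simp
  qed
  have c2: "\<forall>P\<in>insert Q F. \<forall>P'\<in>insert Q F. P \<noteq> P' \<longrightarrow> path_edges P \<inter> path_edges P' = {}"
  proof (intro ballI impI)
    fix P P' assume P: "P \<in> insert Q F" and P': "P' \<in> insert Q F" and ne: "P \<noteq> P'"
    show "path_edges P \<inter> path_edges P' = {}"
    proof (cases "P = Q")
      case True
      then have "P' \<in> F" using P' ne by simp
      then show ?thesis using PD[of P'] QE True by blast
    next
      case False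
      then have PF: "P \<in> F" using P by simp
      show ?thesis
      proof (cases "P' = Q")
        case True then show ?thesis using PD[OF PF] QE by blast
      next
        case False then have "P' \<in> F" using P' by simp
        then show ?thesis using invar_pdisj[OF assms(1)] PF ne by simp
      qed
    qed
  qed
  have c5: "system_edges (insert Q F) \<inter> \<Union>C = {}" using se invar_pc[OF assms(1)] QE by blast
  have c7: "system_edges (insert Q F) \<union> \<Union>C \<subseteq> E" using D' QE invar_sub[OF assms(1)] by blast
  have c8: "\<forall>X. X \<subseteq> V - {s, t} \<longrightarrow> finite (cut_edges (system_edges (insert Q F) \<union> \<Union>C) I X) \<and>
          even (card (cut_edges (system_edges (insert Q F) \<union> \<Union>C) I X))"
  proof (intro allI impI)
    fix X assume X: "X \<subseteq> V - {s, t}"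
    have a: "path_edges Q \<inter> ?D = {}" using QE by blast
    have b: "finite (cut_edges (path_edges Q) I X) \<and> even (card (cut_edges (path_edges Q) I X))"
      using X by (intro st_path_parity[OF assms(2)]) auto
    have c: "finite (cut_edges ?D I X) \<and> even (card (cut_edges ?D I X))"
      using invar_par[OF assms(1)] X by simp
    show "finite (cut_edges (system_edges (insert Q F) \<union> \<Union>C) I X) \<and>
          even (card (cut_edges (system_edges (insert Q F) \<union> \<Union>C) I X))"
      unfolding D' by (rule even_union[OF a b c])
  qed
  have "E - (system_edges (insert Q F) \<union> \<Union>C) = (E - ?D) - path_edges Q" unfolding D' by blast
  then have c9: "is_linked (E - (system_edges (insert Q F) \<union> \<Union>C)) I s t" using assms(3) by simp
  show ?thesis using c1 c2 c5 c7 c8 c9 invar_cycles[OF assms(1)] invar_cdisj[OF assms(1)] invar_sc[OF assms(1)]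
    by (intro invarI)
qed

lemma invar_add_cycle:
  assumes "invar V E I s t F C"
    "is_cycle (E - (system_edges F \<union> \<Union>C)) I c"
    "c \<inter> delta E I s = {}"
    "is_linked ((E - (system_edges F \<union> \<Union>C)) - c) I s t"
  shows "invar V E I s t F (insert c C)"
proof -
  let ?D = "system_edges F \<union> \<Union>C"
  have cE: "c \<subseteq> E - ?D" by (rule is_cycle_sub[OF assms(2)])
  have D': "system_edges F \<union> \<Union>(insert c C) = c \<union> ?D" by auto
  have c3: "\<forall>d\<in>insert c C. is_cycle E I d"
  proof -
    have "is_cycle E I c" using cE by (intro is_cycle_restrict[OF assms(2)]) blast
    then show ?thesis using invar_cycles[OF assms(1)] by simp
  qed
  have c4: "\<forall>d\<in>insert c C. \<forall>d'\<in>insert c C. d \<noteq> d' \<longrightarrow> d \<inter> d' = {}"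
  proof (intro ballI impI)
    fix d d' assume d: "d \<in> insert c C" and d': "d' \<in> insert c C" and ne: "d \<noteq> d'"
    show "d \<inter> d' = {}"
    proof (cases "d = c")
      case True
      then have "d' \<in> C" using d' ne by simp
      then show ?thesis using cE True by blast
    next
      case False
      then have dC: "d \<in> C" using d by simp
      show ?thesis
      proof (cases "d' = c")
        case True then show ?thesis using dC cE by blast
      next
        case False then have "d' \<in> C" using d' by simp
        then show ?thesis using invar_cdisj[OF assms(1)] dC ne by simp
      qed
    qed
  qed
  have c5: "system_edges F \<inter> \<Union>(insert c C) = {}" using invar_pc[OF assms(1)] cE by blast
  have c6: "delta E I s \<inter> \<Union>(insert c C) = {}" using invar_sc[OF assms(1)] assms(3) by blast
  have c7: "system_edges F \<union> \<Union>(insert c C) \<subseteq> E" using D' cE invar_sub[OF assms(1)] by blast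
  have c8: "\<forall>X. X \<subseteq> V - {s, t} \<longrightarrow> finite (cut_edges (system_edges F \<union> \<Union>(insert c C)) I X) \<and>
          even (card (cut_edges (system_edges F \<union> \<Union>(insert c C)) I X))"
  proof (intro allI impI)
    fix X assume X: "X \<subseteq> V - {s, t}"
    have a: "c \<inter> ?D = {}" using cE by blast
    have b: "finite (cut_edges c I X) \<and> even (card (cut_edges c I X))"
      by (rule cycle_parity[OF assms(2)])
    have cc: "finite (cut_edges ?D I X) \<and> even (card (cut_edges ?D I X))"
      using invar_par[OF assms(1)] X by simp
    show "finite (cut_edges (system_edges F \<union> \<Union>(insert c C)) I X) \<and>
          even (card (cut_edges (system_edges F \<union> \<Union>(insert c C)) I X))"
      unfolding D' by (rule even_union[OF a b cc])
  qed
  have "E - (system_edges F \<union> \<Union>(insert c C)) = (E - ?D) - c" unfolding D' by blast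
  then have c9: "is_linked (E - (system_edges F \<union> \<Union>(insert c C))) I s t" using assms(4) by simp
  show ?thesis using invar_paths[OF assms(1)] invar_pdisj[OF assms(1)] c3 c4 c5 c6 c7 c8 c9
    by (intro invarI)
qed

lemma path_prefix:
  assumes "is_path A I (vs, es)" "k < length vs"
  shows "is_path A I (take (Suc k) vs, take k es)"
  using assms unfolding is_path_def by auto

lemma reroute:
  assumes st: "st_path H I s t (vs, es)" and sX: "s \<notin> X" and tX: "t \<notin> X"
    and v: "v \<in> set vs" "v \<in> X"
    and hX: "\<And>a. a \<in> X \<Longrightarrow> \<exists>ws fs. is_path A I (ws, fs) \<and> hd ws = a \<and> last ws = u \<and> set ws \<subseteq> X"
    and x: "I x = {u, t}"
  shows "\<exists>Q'. st_path (set es \<union> A \<union> {x}) I s t Q' \<and> x \<in> path_edges Q' \<and> es ! 0 \<in> path_edges Q'"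
proof -
  have pth: "is_path H I (vs, es)" and hd: "hd vs = s" and lst: "last vs = t"
    using st unfolding st_path_def by auto
  have L: "length vs = Suc (length es)" "distinct vs" using pth unfolding is_path_def by auto
  have vs0: "vs ! 0 = s" using hd L by (cases vs) auto
  let ?P = "\<lambda>i. i < length vs \<and> vs ! i \<in> X"
  have "\<exists>i. ?P i" using v by (auto simp: in_set_conv_nth)
  then obtain j where j: "?P j" and jmin: "\<And>i. i < j \<Longrightarrow> \<not> ?P i"
    using exists_least_iff[of ?P] by blast
  have j0: "j \<noteq> 0" using j vs0 sX by (cases j) auto
  have takeX: "set (take j vs) \<inter> X = {}"
  proof -
    { fix w assume "w \<in> set (take j vs)" "w \<in> X"
      then obtain i where "i < length (take j vs)" "take j vs ! i = w" by (auto simp: in_set_conv_nth)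
      then have "i < j" "vs ! i = w" "i < length vs" by auto
      then have False using jmin \<open>w \<in> X\<close> by blast }
    then show ?thesis by blast
  qed
  obtain ws fs where W: "is_path A I (ws, fs)" "hd ws = vs ! j" "last ws = u" "set ws \<subseteq> X"
    using hX[of "vs ! j"] j by blast
  have LW: "length ws = Suc (length fs)" "distinct ws" using W(1) unfolding is_path_def by auto
  have wsne: "ws \<noteq> []" using LW by auto
  have uX: "u \<in> X" using W(3,4) wsne by auto
  have ut: "u \<noteq> t" using uX tX by auto
  have P1: "is_path H I (take (Suc j) vs, take j es)" using path_prefix[OF pth] j by simp
  have bt: "butlast (take (Suc j) vs) = take j vs" using j by (simp add: butlast_take)
  have lt: "last (take (Suc j) vs) = vs ! j" using j by (simp add: take_Suc_conv_app_nth)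
  have d1: "distinct (take j vs @ ws)" using L LW takeX W(4) by auto
  have J1: "is_path (H \<union> A) I (take j vs @ ws, take j es @ fs)"
    using path_join[OF P1 W(1)] bt lt W(2) d1 by simp
  have P3: "is_path {x} I ([u, t], [x])" using ut x unfolding is_path_def by auto
  have bt2: "butlast (take j vs @ ws) @ [u, t] = take j vs @ ws @ [t]"
  proof -
    have "butlast ws @ [u] = ws" using W(3) wsne by (metis append_butlast_last_id)
    then show ?thesis using wsne by (simp add: butlast_append)
  qed
  have tnot: "t \<notin> set (take j vs)"
  proof
    assume "t \<in> set (take j vs)"
    moreover have "t \<in> set (drop j vs)" using lst j by (metis last_drop last_in_set drop_eq_Nil leD)
    ultimately show False using set_take_disj_set_drop_if_distinct[OF L(2), of j j] by blast
  qed
  have d2: "distinct (take j vs @ ws @ [t])" using d1 tnot W(4) tX by auto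
  have J2: "is_path ((H \<union> A) \<union> {x}) I (take j vs @ ws @ [t], (take j es @ fs) @ [x])"
    using path_join[OF J1 P3] W(3) wsne bt2 d2 by simp
  let ?Q = "(take j vs @ ws @ [t], (take j es @ fs) @ [x])"
  have fsA: "set fs \<subseteq> A" using is_path_edges[OF W(1)] by (simp add: path_edges_def)
  have "path_edges ?Q \<subseteq> set es \<union> A \<union> {x}"
    using fsA set_take_subset[of j es] by (auto simp: path_edges_def)
  then have Q1: "is_path (set es \<union> A \<union> {x}) I ?Q" by (rule is_path_restrict[OF J2])
  have tjne: "take j vs \<noteq> []" using j0 j by (cases vs) auto
  have hdQ: "hd (fst ?Q) = s" using tjne hd j0 by (cases vs) auto
  have lastQ: "last (fst ?Q) = t" by simp
  have e0: "es ! 0 \<in> set (take j es)" using j0 j L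
    by (metis gr0I in_set_conv_nth length_take less_Suc_eq_le min_def nth_take not_less_eq)
  show ?thesis
    apply (rule exI[of _ ?Q])
    using Q1 hdQ lastQ e0 by (auto simp: st_path_def path_edges_def)
qed

lemma reach_sub:
  assumes "is_path A I (ws, fs)" "last ws = u" "w \<in> set ws"
  shows "\<exists>ws' fs'. is_path A I (ws', fs') \<and> hd ws' = w \<and> last ws' = u"
proof -
  obtain k where k: "k < length ws" "ws ! k = w" using assms(3) by (auto simp: in_set_conv_nth)
  have "is_path A I (drop k ws, drop k fs)" by (rule path_suffix[OF assms(1) k(1)])
  moreover have "hd (drop k ws) = w" using k by (simp add: hd_drop_conv_nth)
  moreover have "last (drop k ws) = u" using k assms(2) by (simp add: last_drop)
  ultimately show ?thesis by blast
qed

lemma reach_closed: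
  assumes "is_path A I (ws, fs)" "hd ws = a" "last ws = u" "e \<in> A" "I e = {w, a}"
  shows "\<exists>ws' fs'. is_path A I (ws', fs') \<and> hd ws' = w \<and> last ws' = u"
proof (cases "w \<in> set ws")
  case True then show ?thesis using reach_sub[OF assms(1,3)] by blast
next
  case False
  have LW: "length ws = Suc (length fs)" using assms(1) unfolding is_path_def by auto
  have "is_path A I (w # ws, e # fs)" using path_prepend[OF assms(1) False assms(4)] assms(2,5) by simp
  moreover have "last (w # ws) = u" using LW assms(3) by auto
  ultimately show ?thesis by fastforce
qed

lemma path_cycle:
  assumes "is_path A I (ws, fs)" "hd ws = t" "last ws = u" "u \<noteq> t" "x \<notin> set fs" "I x = {u, t}"
  shows "is_cycle (A \<union> {x}) I (insert x (set fs))"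
proof -
  have LW: "length ws = Suc (length fs)" "distinct ws"
    and E: "\<And>i. i < length fs \<Longrightarrow> fs ! i \<in> A \<and> I (fs ! i) = {ws ! i, ws ! Suc i}"
    using assms(1) unfolding is_path_def by auto
  have fsne: "fs \<noteq> []" using LW assms(2,3,4) by (cases ws) auto
  have df: "distinct (fs @ [x])" using path_distinct_edges[OF assms(1)] assms(5) by simp
  have w0: "ws ! 0 = t" using assms(2) LW by (cases ws) auto
  have wl: "ws ! length fs = u" using assms(3) LW last_conv_nth[of ws] by fastforce
  have "\<forall>i < length (fs @ [x]). (fs @ [x]) ! i \<in> A \<union> {x} \<and>
         I ((fs @ [x]) ! i) = {ws ! i, ws ! ((Suc i) mod (length ws))}"
  proof (intro allI impI)
    fix i assume i: "i < length (fs @ [x])"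
    show "(fs @ [x]) ! i \<in> A \<union> {x} \<and> I ((fs @ [x]) ! i) = {ws ! i, ws ! ((Suc i) mod (length ws))}"
    proof (cases "i < length fs")
      case True
      then show ?thesis using E[OF True] LW by (simp add: nth_append)
    next
      case False
      then have "i = length fs" using i by simp
      then show ?thesis using LW w0 wl assms(6) by (simp add: nth_append insert_commute)
    qed
  qed
  moreover have "length ws = length (fs @ [x])" "2 \<le> length (fs @ [x])" using LW fsne by (auto simp: Suc_le_eq)
  moreover have "set (fs @ [x]) = insert x (set fs)" by simp
  ultimately show ?thesis unfolding is_cycle_def using LW(2) df by blast
qed

lemma edge_ends:
  assumes "multigraph V E I" "x \<in> E" "t \<in> I x"
  shows "\<exists>u. I x = {u, t} \<and> u \<noteq> t \<and> u \<in> V"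
proof -
  have c: "card (I x) = 2" and sub: "I x \<subseteq> V" using assms(1,2) unfolding multigraph_def by auto
  obtain a b where ab: "I x = {a, b}" "a \<noteq> b" using c card_2_iff by metis
  show ?thesis
  proof (cases "t = a")
    case True then show ?thesis using ab sub by (intro exI[of _ b]) auto
  next
    case False then have "t = b" using ab assms(3) by auto
    then show ?thesis using ab sub by (intro exI[of _ a]) auto
  qed
qed

lemma edge_two:
  assumes "multigraph V E I" "e \<in> E"
  shows "\<exists>p q. I e = {p, q} \<and> p \<noteq> q"
proof -
  have "card (I e) = 2" using assms unfolding multigraph_def by simp
  then show ?thesis by (simp add: card_2_iff)
qed

lemma edge_V:
  assumes "multigraph V E I" "e \<in> E"
  shows "I e \<subseteq> V"
  using assms unfolding multigraph_def by simp

lemma step: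
  assumes mg: "multigraph V E I" and st: "s \<noteq> t" and ie: "inner_eulerian V E I s t"
    and inv: "invar V E I s t F C"
  shows "\<exists>F' C'. invar V E I s t F' C' \<and> F \<subseteq> F' \<and> C \<subseteq> C' \<and>
     (x \<in> delta E I s \<longrightarrow> x \<in> system_edges F') \<and>
     (x \<in> delta E I t \<longrightarrow> x \<in> system_edges F' \<union> \<Union>C')"
proof -
  define D where "D = system_edges F \<union> \<Union>C"
  define H where "H = E - D"
  note invD = invarD[OF inv, folded D_def]
  show ?thesis
  proof (cases "x \<in> H")
    case False
    have "x \<in> delta E I s \<longrightarrow> x \<in> system_edges F"
      using False invD(6) unfolding H_def D_def delta_def by blast
    moreover have "x \<in> delta E I t \<longrightarrow> x \<in> system_edges F \<union> \<Union>C"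
      using False unfolding H_def D_def delta_def by blast
    ultimately show ?thesis using inv by blast
  next
    case xH: True
    obtain R where R: "system_links H I s t R" using invD(9) unfolding is_linked_def H_def by blast
    have Rst: "\<forall>P\<in>R. st_path H I s t P"
      using R unfolding system_links_def edge_disjoint_st_system_def by simp
    have Rdj: "\<forall>P\<in>R. \<forall>Q\<in>R. P \<noteq> Q \<longrightarrow> path_edges P \<inter> path_edges Q = {}"
      using R unfolding system_links_def edge_disjoint_st_system_def by simp
    have Rd: "delta H I s \<subseteq> system_edges R"
      using R unfolding system_links_def by simp
    have HE: "H \<subseteq> E" unfolding H_def by blast
    have HD: "E - (system_edges F \<union> \<Union>C) = H" unfolding H_def D_def ..
    show ?thesis
    proof (cases "x \<in> system_edges R")
      case True
      then obtain Q where Q: "Q \<in> R" "x \<in> path_edges Q" unfolding system_edges_def by blast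
      have QH: "st_path H I s t Q" using Rst Q by simp
      have "system_links (H - path_edges Q) I s t (R - {Q})"
      proof (rule links_remove[OF R])
        show "R - {Q} \<subseteq> R" by blast
        show "path_edges Q \<inter> system_edges (R - {Q}) = {}"
          using Rdj Q(1) unfolding system_edges_def by blast
        show "delta H I s - path_edges Q \<subseteq> system_edges (R - {Q})"
          using Rd unfolding system_edges_def by blast
      qed
      then have lk: "is_linked (H - path_edges Q) I s t" unfolding is_linked_def by blast
      have inv': "invar V E I s t (insert Q F) C"
        by (rule invar_add_path[OF inv]) (simp_all only: HD QH lk)
      have "x \<in> system_edges (insert Q F)" using Q unfolding system_edges_def by blast
      then show ?thesis using inv' by blast
    next
      case xR: False
      have xs: "x \<notin> delta E I s"
      proof
        assume "x \<in> delta E I s"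
        then have "x \<in> delta H I s" using xH unfolding delta_def by blast
        then show False using Rd xR by blast
      qed
      show ?thesis
      proof (cases "t \<in> I x")
        case False
        then have "x \<notin> delta E I t" unfolding delta_def by blast
        then show ?thesis using xs inv by blast
      next
        case True
        obtain u where u: "I x = {u, t}" "u \<noteq> t" "u \<in> V"
          using edge_ends[OF mg _ True] xH HE by blast
        have us: "u \<noteq> s" using xs u xH HE unfolding delta_def by blast
        define A where "A = H - system_edges R - {x}"
        define X where "X = {a. \<exists>ws fs. is_path A I (ws, fs) \<and> hd ws = a \<and> last ws = u}"
        have AH: "A \<subseteq> H" unfolding A_def by blast
        have uX: "u \<in> X" unfolding X_def
          by (rule CollectI, rule exI[of _ "[u]"], rule exI[of _ "[]"]) (simp add: is_path_def)
        have clos: "\<And>a e w. a \<in> X \<Longrightarrow> e \<in> A \<Longrightarrow> I e = {w, a} \<Longrightarrow> w \<in> X"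
          unfolding X_def using reach_closed by fastforce
        have hX: "\<And>a. a \<in> X \<Longrightarrow> \<exists>ws fs. is_path A I (ws, fs) \<and> hd ws = a \<and> last ws = u \<and> set ws \<subseteq> X"
        proof -
          fix a assume "a \<in> X"
          then obtain ws fs where W: "is_path A I (ws, fs)" "hd ws = a" "last ws = u" unfolding X_def by blast
          have "set ws \<subseteq> X" unfolding X_def using reach_sub[OF W(1) W(3)] by blast
          then show "\<exists>ws fs. is_path A I (ws, fs) \<and> hd ws = a \<and> last ws = u \<and> set ws \<subseteq> X" using W by blast
        qed
        show ?thesis
        proof (cases "t \<in> X")
          case True
          then obtain ws fs where W: "is_path A I (ws, fs)" "hd ws = t" "last ws = u" unfolding X_def by blast
          have xfs: "x \<notin> set fs" using is_path_edges[OF W(1)] unfolding A_def path_edges_def by auto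
          define c where "c = insert x (set fs)"
          have cyc: "is_cycle (A \<union> {x}) I c" unfolding c_def
            by (rule path_cycle[OF W u(2) xfs u(1)])
          have cA: "c \<subseteq> A \<union> {x}" by (rule is_cycle_sub[OF cyc])
          have cH: "c \<subseteq> H" using cA AH xH by blast
          have cR: "c \<inter> system_edges R = {}" using cA xR unfolding A_def by blast
          have cyc': "is_cycle (E - (system_edges F \<union> \<Union>C)) I c" unfolding HD
            by (rule is_cycle_restrict[OF cyc cH])
          have cs: "c \<inter> delta E I s = {}"
          proof -
            { fix e assume "e \<in> c" "e \<in> delta E I s"
              then have "e \<in> delta H I s" using cH unfolding delta_def by blast
              then have False using Rd cR \<open>e \<in> c\<close> by blast }
            then show ?thesis by blast
          qed
          have "system_links (H - c) I s t R"
            by (rule links_remove[OF R]) (use cR Rd in blast)+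
          then have lk: "is_linked (H - c) I s t" unfolding is_linked_def by blast
          have inv': "invar V E I s t F (insert c C)"
            by (rule invar_add_cycle[OF inv cyc' cs]) (simp only: HD lk)
          have "x \<in> \<Union>(insert c C)" unfolding c_def by blast
          then show ?thesis using inv' xs by blast
        next
          case tX: False
          have sX: "s \<notin> X"
          proof
            assume "s \<in> X"
            then obtain ws fs where W: "is_path A I (ws, fs)" "hd ws = s" "last ws = u" unfolding X_def by blast
            have LW: "length ws = Suc (length fs)"
              and E0: "\<And>i. i < length fs \<Longrightarrow> fs ! i \<in> A \<and> I (fs ! i) = {ws ! i, ws ! Suc i}"
              using W(1) unfolding is_path_def by auto
            show False
            proof (cases fs)
              case Nil then show False using LW W us by (cases ws) auto
            next
              case (Cons f fs')
              then have "f \<in> A" "I f = {ws ! 0, ws ! 1}" using E0[of 0] by auto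
              moreover have "ws ! 0 = s" using W(2) LW by (cases ws) auto
              ultimately have "f \<in> delta H I s" using AH unfolding delta_def by auto
              then show False using Rd \<open>f \<in> A\<close> unfolding A_def by blast
            qed
          qed
          have XV: "X \<subseteq> V"
          proof
            fix a assume "a \<in> X"
            then obtain ws fs where W: "is_path A I (ws, fs)" "hd ws = a" "last ws = u" unfolding X_def by blast
            have LW: "length ws = Suc (length fs)"
              and E0: "\<And>i. i < length fs \<Longrightarrow> fs ! i \<in> A \<and> I (fs ! i) = {ws ! i, ws ! Suc i}"
              using W(1) unfolding is_path_def by auto
            show "a \<in> V"
            proof (cases fs)
              case Nil then show ?thesis using LW W u(3) by (cases ws) auto
            next
              case (Cons f fs')
              then have "f \<in> A" "I f = {ws ! 0, ws ! 1}" using E0[of 0] by auto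
              moreover have "ws ! 0 = a" using W(2) LW by (cases ws) auto
              moreover have "f \<in> E" using \<open>f \<in> A\<close> AH HE by blast
              then have "I f \<subseteq> V" by (rule edge_V[OF mg])
              ultimately show ?thesis by auto
            qed
          qed
          have "\<exists>e\<in>system_edges R. card (I e \<inter> X) = 1"
          proof (rule ccontr)
            assume nc: "\<not> (\<exists>e\<in>system_edges R. card (I e \<inter> X) = 1)"
            have cutH: "cut_edges H I X = {x}"
            proof
              show "cut_edges H I X \<subseteq> {x}"
              proof
                fix e assume e: "e \<in> cut_edges H I X"
                then have eH: "e \<in> H" and ec: "card (I e \<inter> X) = 1" unfolding cut_edges_def by auto
                have eR: "e \<notin> system_edges R" using nc ec by blast
                show "e \<in> {x}"
                proof (rule ccontr)
                  assume "e \<notin> {x}"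
                  then have eA: "e \<in> A" unfolding A_def using eH eR by blast
                  have "e \<in> E" using eA AH HE by blast
                  then obtain p q where pq: "I e = {p, q}" "p \<noteq> q"
                    using edge_two[OF mg] by blast
                  have "(p \<in> X) \<noteq> (q \<in> X)" using card_cut_two[OF pq(2)] ec pq(1) by simp
                  moreover have "p \<in> X \<Longrightarrow> q \<in> X" using clos[of p e q] eA pq(1) by (simp add: insert_commute)
                  moreover have "q \<in> X \<Longrightarrow> p \<in> X" using clos[of q e p] eA pq(1) by simp
                  ultimately show False by blast
                qed
              qed
              have "I x \<inter> X = {u}" using u(1) uX tX by auto
              then show "{x} \<subseteq> cut_edges H I X" using xH unfolding cut_edges_def by simp
            qed
            have DE: "D \<subseteq> E" using invD(7) by simp
            have EHD: "E = H \<union> D" "H \<inter> D = {}" using DE unfolding H_def by blast+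
            have Xs: "X \<subseteq> V - {s, t}" using XV sX tX by blast
            have pD: "finite (cut_edges D I X) \<and> even (card (cut_edges D I X))" using invD(8) Xs by blast
            have cu: "cut_edges E I X = cut_edges H I X \<union> cut_edges D I X \<and> cut_edges H I X \<inter> cut_edges D I X = {}"
              using cut_union[OF EHD(2)] EHD(1) by simp
            have "finite (cut_edges E I X)" using cu cutH pD by simp
            moreover have "card (cut_edges E I X) = 1 + card (cut_edges D I X)"
              using cu cutH pD by (simp add: card_Un_disjoint)
            ultimately have "finite (cut_edges E I X) \<and> odd (card (cut_edges E I X))" using pD by simp
            moreover have "\<not> (finite (cut_edges E I X) \<and> odd (card (cut_edges E I X)))"
              using ie Xs unfolding inner_eulerian_def by simp
            ultimately show False by simp
          qed
          then obtain e Q where eQ: "Q \<in> R" "e \<in> path_edges Q" "card (I e \<inter> X) = 1"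
            unfolding system_edges_def by blast
          obtain vs es where Qv: "Q = (vs, es)" by (cases Q)
          have QH: "st_path H I s t (vs, es)" using Rst eQ(1) Qv by simp
          have QP: "is_path H I (vs, es)" "hd vs = s" using QH unfolding st_path_def by auto
          have LQ: "length vs = Suc (length es)"
            and EQ: "\<And>i. i < length es \<Longrightarrow> es ! i \<in> H \<and> I (es ! i) = {vs ! i, vs ! Suc i}"
            using QP unfolding is_path_def by auto
          obtain i where i: "i < length es" "e = es ! i" using eQ(2) Qv unfolding path_edges_def
            by (auto simp: in_set_conv_nth)
          have "vs ! i \<in> X \<or> vs ! Suc i \<in> X"
          proof (rule ccontr)
            assume "\<not> (vs ! i \<in> X \<or> vs ! Suc i \<in> X)"
            then have "I e \<inter> X = {}" using EQ[OF i(1)] i(2) by auto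
            then show False using eQ(3) by simp
          qed
          then obtain v where v: "v \<in> set vs" "v \<in> X" using i LQ
            by (metis Suc_mono less_SucI nth_mem)
          obtain Q' where Q': "st_path (set es \<union> A \<union> {x}) I s t Q'" "x \<in> path_edges Q'" "es ! 0 \<in> path_edges Q'"
            using reroute[OF QH sX tX v hX u(1)] by blast
          have esH: "set es \<subseteq> H" using is_path_edges[OF QP(1)] unfolding path_edges_def by simp
          have Q'K: "path_edges Q' \<subseteq> set es \<union> A \<union> {x}"
            using Q'(1) unfolding st_path_def by (intro is_path_edges[of _ I]) simp
          have Q'H: "st_path H I s t Q'"
            using Q'K esH AH xH by (intro st_path_restrict[OF Q'(1)]) blast
          have "system_links (H - path_edges Q') I s t (R - {Q})"
          proof (rule links_remove[OF R])
            show "R - {Q} \<subseteq> R" by blast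
            have "set es \<inter> system_edges (R - {Q}) = {}"
              using Rdj eQ(1) Qv unfolding system_edges_def path_edges_def by fastforce
            moreover have "A \<inter> system_edges (R - {Q}) = {}" unfolding A_def system_edges_def by blast
            moreover have "x \<notin> system_edges (R - {Q})" using xR unfolding system_edges_def by blast
            ultimately show "path_edges Q' \<inter> system_edges (R - {Q}) = {}" using Q'K by blast
            show "delta H I s - path_edges Q' \<subseteq> system_edges (R - {Q})"
            proof
              fix f assume f: "f \<in> delta H I s - path_edges Q'"
              then obtain P where P: "P \<in> R" "f \<in> path_edges P" using Rd unfolding system_edges_def by blast
              have "P \<noteq> Q"
              proof
                assume "P = Q"
                then have "f \<in> set es" using P Qv unfolding path_edges_def by simp
                moreover have "s \<in> I f" using f unfolding delta_def by simp
                ultimately have "f = es ! 0" using path_s_edge[OF QP(1) QP(2)] by blast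
                then show False using f Q'(3) by blast
              qed
              then show "f \<in> system_edges (R - {Q})" using P unfolding system_edges_def by blast
            qed
          qed
          then have lk: "is_linked (H - path_edges Q') I s t" unfolding is_linked_def by blast
          have inv': "invar V E I s t (insert Q' F) C"
            by (rule invar_add_path[OF inv]) (simp_all only: HD Q'H lk)
          have "x \<in> system_edges (insert Q' F)" using Q'(2) unfolding system_edges_def by blast
          then show ?thesis using inv' by blast
        qed
      qed
    qed
  qed
qed

theorem lemma6p2:
  fixes V :: "'v set" and E :: "'e set" and I :: "'e \<Rightarrow> 'v set" and s t :: 'v
  assumes "multigraph V E I"
    and "s \<in> V" and "t \<in> V" and "s \<noteq> t"
    and "inner_eulerian V E I s t"
    and "countable E"
    and "is_linked E I s t"
  shows "\<exists>\<P>. linkage E I s t \<P> \<and>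
           (\<exists>\<C>. (\<forall>C\<in>\<C>. is_cycle (E - system_edges \<P>) I C) \<and>
                 (\<forall>C\<in>\<C>. \<forall>D\<in>\<C>. C \<noteq> D \<longrightarrow> C \<inter> D = {}) \<and>
                 delta (E - system_edges \<P>) I t \<subseteq> \<Union>\<C>)"
proof -
  define x where "x = from_nat_into E"
  let ?inv = "\<lambda>FC. invar V E I s t (fst FC) (snd FC)"
  let ?Q = "\<lambda>(p :: nat \<times> (('v list \<times> 'e list) set \<times> 'e set set)) q.
     ?inv (snd p) \<longrightarrow> (?inv q \<and> fst (snd p) \<subseteq> fst q \<and> snd (snd p) \<subseteq> snd q \<and>
        (x (fst p) \<in> delta E I s \<longrightarrow> x (fst p) \<in> system_edges (fst q)) \<and>
        (x (fst p) \<in> delta E I t \<longrightarrow> x (fst p) \<in> system_edges (fst q) \<union> \<Union>(snd q)))"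
  have "\<forall>p. \<exists>q. ?Q p q"
  proof
    fix p :: "nat \<times> (('v list \<times> 'e list) set \<times> 'e set set)"
    show "\<exists>q. ?Q p q"
    proof (cases "?inv (snd p)")
      case True
      from step[OF assms(1) assms(4) assms(5) True, of "x (fst p)"]
      obtain F' C' where "invar V E I s t F' C' \<and> fst (snd p) \<subseteq> F' \<and> snd (snd p) \<subseteq> C' \<and>
         (x (fst p) \<in> delta E I s \<longrightarrow> x (fst p) \<in> system_edges F') \<and>
         (x (fst p) \<in> delta E I t \<longrightarrow> x (fst p) \<in> system_edges F' \<union> \<Union>C')" by blast
      then have "?Q p (F', C')" by (simp add: case_prod_beta)
      then show ?thesis by blast
    next
      case False then show ?thesis by (simp add: case_prod_beta)
    qed
  qed
  then obtain g where g: "\<And>p. ?Q p (g p)" by metis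
  define S where "S = rec_nat ({}, {}) (\<lambda>n st. g (n, st))"
  have S0: "S 0 = ({}, {})" unfolding S_def by simp
  have SS: "\<And>n. S (Suc n) = g (n, S n)" unfolding S_def by simp
  have invS: "\<And>n. ?inv (S n)"
  proof -
    fix n show "?inv (S n)"
    proof (induction n)
      case 0 show ?case using invar_init[OF assms(7)] S0 by simp
    next
      case (Suc n)
      then show ?case using g[of "(n, S n)"] SS[of n] by simp
    qed
  qed
  have stepS: "\<And>n. fst (S n) \<subseteq> fst (S (Suc n)) \<and> snd (S n) \<subseteq> snd (S (Suc n)) \<and>
        (x n \<in> delta E I s \<longrightarrow> x n \<in> system_edges (fst (S (Suc n)))) \<and>
        (x n \<in> delta E I t \<longrightarrow> x n \<in> system_edges (fst (S (Suc n))) \<union> \<Union>(snd (S (Suc n))))"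
  proof -
    fix n
    have "?Q (n, S n) (g (n, S n))" by (rule g)
    then show "?thesis n" using invS[of n] SS[of n] by (simp only: case_prod_beta fst_conv snd_conv) simp
  qed
  have monoF: "\<And>m n. m \<le> n \<Longrightarrow> fst (S m) \<subseteq> fst (S n)"
    by (rule lift_Suc_mono_le[of "\<lambda>n. fst (S n)"]) (use stepS in auto)
  have monoC: "\<And>m n. m \<le> n \<Longrightarrow> snd (S m) \<subseteq> snd (S n)"
    by (rule lift_Suc_mono_le[of "\<lambda>n. snd (S n)"]) (use stepS in auto)
  define PP where "PP = (\<Union>n. fst (S n))"
  define CC where "CC = (\<Union>n. snd (S n))"
  have allx: "\<And>e. e \<in> E \<Longrightarrow> \<exists>n. x n = e" unfolding x_def using from_nat_into_surj[OF assms(6)] by blast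
  have PPst: "\<forall>P\<in>PP. st_path E I s t P"
    unfolding PP_def using invar_paths[OF invS] by blast
  have PPdj: "\<forall>P\<in>PP. \<forall>Q\<in>PP. P \<noteq> Q \<longrightarrow> path_edges P \<inter> path_edges Q = {}"
  proof (intro ballI impI)
    fix P Q assume "P \<in> PP" "Q \<in> PP" "P \<noteq> Q"
    then obtain m n where "P \<in> fst (S m)" "Q \<in> fst (S n)" unfolding PP_def by blast
    then have "P \<in> fst (S (max m n))" "Q \<in> fst (S (max m n))" using monoF[of m "max m n"] monoF[of n "max m n"] by auto
    then show "path_edges P \<inter> path_edges Q = {}" using invar_pdisj[OF invS[of "max m n"]] \<open>P \<noteq> Q\<close> by blast
  qed
  have PPs: "delta E I s \<subseteq> system_edges PP"
  proof
    fix e assume e: "e \<in> delta E I s"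
    then obtain n where n: "x n = e" using allx unfolding delta_def by blast
    then have "e \<in> system_edges (fst (S (Suc n)))" using stepS[of n] e by simp
    then show "e \<in> system_edges PP" unfolding PP_def system_edges_def by blast
  qed
  have lkg: "linkage E I s t PP"
  proof -
    have "\<forall>P\<in>PP. path_edges P \<inter> delta E I s \<noteq> {}"
    proof
      fix P assume "P \<in> PP"
      then have sp: "st_path E I s t P" using PPst by blast
      obtain vs es where P: "P = (vs, es)" by (cases P)
      have "es \<noteq> [] \<and> es ! 0 \<in> E \<and> s \<in> I (es ! 0)" using st_path_first_edge[OF sp[unfolded P] assms(4)] .
      then have "es ! 0 \<in> path_edges P \<inter> delta E I s" unfolding P path_edges_def delta_def by auto
      then show "path_edges P \<inter> delta E I s \<noteq> {}" by blast
    qed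
    then show ?thesis unfolding linkage_def system_links_def edge_disjoint_st_system_def
      using PPst PPdj PPs by blast
  qed
  have CCdisjP: "\<And>c. c \<in> CC \<Longrightarrow> c \<inter> system_edges PP = {}"
  proof -
    fix c assume "c \<in> CC"
    then obtain n where n: "c \<in> snd (S n)" unfolding CC_def by blast
    { fix e assume e: "e \<in> c" "e \<in> system_edges PP"
      then obtain P m where P: "P \<in> fst (S m)" "e \<in> path_edges P" unfolding PP_def system_edges_def by blast
      have "P \<in> fst (S (max m n))" "c \<in> snd (S (max m n))"
        using P n monoF[of m "max m n"] monoC[of n "max m n"] by auto
      then have "e \<in> system_edges (fst (S (max m n)))" "e \<in> \<Union>(snd (S (max m n)))"
        using P e unfolding system_edges_def by blast+
      then have False using invar_pc[OF invS[of "max m n"]] by blast }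
    then show "c \<inter> system_edges PP = {}" by blast
  qed
  have c1: "\<forall>c\<in>CC. is_cycle (E - system_edges PP) I c"
  proof
    fix c assume c: "c \<in> CC"
    then obtain n where "c \<in> snd (S n)" unfolding CC_def by blast
    then have cyc: "is_cycle E I c" using invar_cycles[OF invS[of n]] by blast
    have "c \<subseteq> E - system_edges PP" using is_cycle_sub[OF cyc] CCdisjP[OF c] by blast
    then show "is_cycle (E - system_edges PP) I c" by (rule is_cycle_restrict[OF cyc])
  qed
  have c2: "\<forall>c\<in>CC. \<forall>d\<in>CC. c \<noteq> d \<longrightarrow> c \<inter> d = {}"
  proof (intro ballI impI)
    fix c d assume "c \<in> CC" "d \<in> CC" "c \<noteq> d"
    then obtain m n where "c \<in> snd (S m)" "d \<in> snd (S n)" unfolding CC_def by blast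
    then have "c \<in> snd (S (max m n))" "d \<in> snd (S (max m n))" using monoC[of m "max m n"] monoC[of n "max m n"] by auto
    then show "c \<inter> d = {}" using invar_cdisj[OF invS[of "max m n"]] \<open>c \<noteq> d\<close> by blast
  qed
  have c3: "delta (E - system_edges PP) I t \<subseteq> \<Union>CC"
  proof
    fix e assume e: "e \<in> delta (E - system_edges PP) I t"
    then have eE: "e \<in> delta E I t" "e \<notin> system_edges PP" unfolding delta_def by auto
    then obtain n where n: "x n = e" using allx unfolding delta_def by blast
    then have "e \<in> system_edges (fst (S (Suc n))) \<union> \<Union>(snd (S (Suc n)))" using stepS[of n] eE by simp
    moreover have "e \<notin> system_edges (fst (S (Suc n)))" using eE unfolding PP_def system_edges_def by blast
    ultimately show "e \<in> \<Union>CC" unfolding CC_def by blast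
  qed
  show ?thesis using lkg c1 c2 c3 by blast
qed

end
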